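(* Let $d>1$ and $a_n=1/n^d$ for all $n\in\mathbb{N}$. Let $\lambda=(\lambda_n)$ be complex numbers with $\operatorname{re}\lambda_n\le0$ for all $n$ and $\lim_{n\to\infty}\lambda_n/a_n=0$. Define $\beta_n:=\frac1n\sum_{m=1}^\infty\ln|1-\lambda_m/a_n|$. Then $\lim_{n\to\infty}\beta_n=0$. *)

theory Defs
  imports Complex_Main
begin

definition seq_a :: "real \<Rightarrow> nat \<Rightarrow> real" where
  "seq_a d n = 1 / (real n powr d)"

definition beta :: "real \<Rightarrow> (nat \<Rightarrow> complex) \<Rightarrow> nat \<Rightarrow> real" where
  "beta d lam n = (1 / real n) *
     (\<Sum>m. ln (cmod (1 - lam (Suc m) / complex_of_real (seq_a d n))))"

end

theory Submission
  imports Defs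
begin

lemma powr_subadd:
  fixes s x :: real assumes "0 < s" "s \<le> 1" "0 \<le> x"
  shows "(1+x) powr s \<le> 1 + x powr s"
proof -
  define y where "y = 1 + x"
  have y: "y > 0" using assms y_def by simp
  have a: "1/y \<le> (1/y) powr s"
    using powr_mono'[of s 1 "1/y"] assms y y_def by (simp add: field_simps)
  have b: "x/y \<le> (x/y) powr s"
    using powr_mono'[of s 1 "x/y"] assms y y_def by (simp add: field_simps)
  have "1 = 1/y + x/y" using y y_def by (simp add: field_simps)
  also have "\<dots> \<le> (1/y) powr s + (x/y) powr s" using a b by simp
  also have "\<dots> = (1 + x powr s) / y powr s" by (simp add: powr_divide add_divide_distrib)
  finally have "y powr s \<le> 1 + x powr s" using y by (simp add: field_simps)
  thus ?thesis by (simp add: y_def)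
qed

lemma ln_powr_le:
  fixes s x :: real assumes "0 < s" "s \<le> 1" "0 \<le> x"
  shows "ln (1+x) \<le> x powr s / s"
proof -
  have "s * ln (1+x) = ln ((1+x) powr s)" using assms by simp
  also have "\<dots> \<le> (1+x) powr s - 1" by (rule ln_le_minus_one) (use assms in simp)
  also have "\<dots> \<le> x powr s" using powr_subadd[OF assms] by simp
  finally show ?thesis using assms by (simp add: field_simps)
qed

lemma sqrt_sum_le: "(\<Sum>m<n. 1 / sqrt (real (m+1))) \<le> 2 * sqrt (real n)"
proof (induction n)
  case 0 then show ?case by simp
next
  case (Suc n)
  have h: "sqrt (real n) * sqrt (real n + 1) \<le> real n + 1/2"
  proof -
    have "sqrt (real n) * sqrt (real n + 1) = sqrt (real n * (real n + 1))" by (simp add: real_sqrt_mult)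
    also have "\<dots> \<le> sqrt ((real n + 1/2)^2)" by (rule real_sqrt_le_mono) (simp add: power2_eq_square algebra_simps)
    also have "\<dots> = real n + 1/2" by simp
    finally show ?thesis .
  qed
  have p: "sqrt (real n + 1) > 0" by simp
  have "1 / sqrt (real n + 1) \<le> 2 * sqrt (real n + 1) - 2 * sqrt (real n)"
  proof -
    have "1 \<le> (2 * sqrt (real n + 1) - 2 * sqrt (real n)) * sqrt (real n + 1)"
      using h by (simp add: algebra_simps)
    thus ?thesis using p by (simp add: field_simps)
  qed
  then show ?case using Suc by (simp add: add.commute)
qed

lemma tail_ineq:
  fixes d k :: real assumes "d > 1" "k \<ge> 1"
  shows "1 / (k+1) powr d \<le> (k powr (1-d) - (k+1) powr (1-d)) / (d-1)"
proof -
  obtain z where z: "k < z" "z < k+1"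
    "(k+1) powr (1-d) - k powr (1-d) = ((k+1) - k) * ((1-d) * z powr (1-d-1))"
  proof -
    have "\<And>x. k \<le> x \<Longrightarrow> x \<le> k+1 \<Longrightarrow> ((\<lambda>x. x powr (1-d)) has_real_derivative (1-d) * x powr (1-d-1)) (at x)"
      using assms by (intro has_real_derivative_powr) auto
    from MVT2[of k "k+1" "\<lambda>x. x powr (1-d)", OF _ this] show ?thesis using that by auto
  qed
  have zp: "z > 0" using z assms by simp
  have "z powr (-d) \<ge> (k+1) powr (-d)"
    using z zp assms by (intro powr_mono2') auto
  hence "(k powr (1-d) - (k+1) powr (1-d)) = (d-1) * z powr (-d)" using z by (simp add: algebra_simps)
  moreover have "1 / (k+1) powr d = (k+1) powr (-d)" using assms by (simp add: powr_minus_divide)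
  ultimately have "(k powr (1-d) - (k+1) powr (1-d)) / (d-1) = z powr (-d)"
    using assms by simp
  thus ?thesis using \<open>z powr (-d) \<ge> (k+1) powr (-d)\<close> \<open>1 / (k+1) powr d = (k+1) powr (-d)\<close> by simp
qed

lemma tail_sum:
  fixes d :: real and n :: nat assumes "d > 1" "n \<ge> 1"
  shows "summable (\<lambda>m. 1 / real (m+1+n) powr d)"
    "(\<Sum>m. 1 / real (m+1+n) powr d) \<le> real n powr (1-d) / (d-1)"
proof -
  define f where "f m = real (m+n) powr (1-d) / (d-1)" for m
  have lim: "f \<longlonglongrightarrow> 0"
  proof -
    have "filterlim (\<lambda>m. real (m+n)) at_top sequentially"
      by (intro filterlim_compose[OF filterlim_real_sequentially] filterlim_add_const_nat_at_top)
    hence "(\<lambda>m. real (m+n) powr (1-d)) \<longlonglongrightarrow> 0"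
      using assms by (intro tendsto_neg_powr) auto
    thus ?thesis unfolding f_def using tendsto_divide_zero by blast
  qed
  have sm: "(\<lambda>m. f m - f (Suc m)) sums (f 0 - 0)" by (rule telescope_sums'[OF lim])
  have le: "1 / real (m+1+n) powr d \<le> f m - f (Suc m)" for m
  proof -
    have "1 / (real (m+n) + 1) powr d \<le> (real (m+n) powr (1-d) - (real (m+n)+1) powr (1-d)) / (d-1)"
      using assms by (intro tail_ineq) auto
    thus ?thesis unfolding f_def by (simp add: diff_divide_distrib add_ac)
  qed
  have nn: "0 \<le> 1 / real (m+1+n) powr d" for m by simp
  show s: "summable (\<lambda>m. 1 / real (m+1+n) powr d)"
    by (rule summable_comparison_test'[OF sums_summable[OF sm], of 0]) (use le nn in \<open>simp only: real_norm_def abs_of_nonneg\<close>)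
  show "(\<Sum>m. 1 / real (m+1+n) powr d) \<le> real n powr (1-d) / (d-1)"
    using sums_le[OF le summable_sums[OF s] sm] by (simp add: f_def)
qed

lemma term_bounds:
  fixes d :: real and lam :: "nat \<Rightarrow> complex" and n k :: nat
  assumes "n \<ge> 1" "k \<ge> 1" "Re (lam k) \<le> 0"
  defines "T \<equiv> ln (cmod (1 - lam k / complex_of_real (seq_a d n)))"
  defines "x \<equiv> cmod (lam k) * real k powr d * real n powr d / real k powr d"
  shows "0 \<le> T" "T \<le> x" "\<And>s. 0 < s \<Longrightarrow> s \<le> 1 \<Longrightarrow> T \<le> x powr s / s"
proof -
  have np: "real n powr d > 0" using assms by simp
  have kp: "real k powr d > 0" using assms by simp
  have xe: "x = cmod (lam k) * real n powr d" unfolding x_def using kp by simp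
  have w: "lam k / complex_of_real (seq_a d n) = lam k * complex_of_real (real n powr d)"
    unfolding seq_a_def using np by (simp add: field_simps)
  define w where "w = lam k * complex_of_real (real n powr d)"
  have "Re (1 - w) = 1 - Re (lam k) * real n powr d" by (simp add: w_def)
  also have "\<dots> \<ge> 1" using assms(3) np by (simp add: mult_nonpos_nonneg)
  finally have ge1: "cmod (1 - w) \<ge> 1" using complex_Re_le_cmod order_trans by blast
  have le: "cmod (1 - w) \<le> 1 + x"
    using norm_triangle_ineq4[of 1 w] np by (simp add: w_def xe norm_mult)
  have T: "T = ln (cmod (1 - w))" unfolding T_def w w_def ..
  show "0 \<le> T" using T ge1 by simp
  have xnn: "0 \<le> x" using xe np by simp
  have Tl: "T \<le> ln (1 + x)" using T ge1 le by (subst T, intro ln_mono) auto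
  show "T \<le> x" using Tl ln_add_one_self_le_self[OF xnn] by linarith
  show "\<And>s. 0 < s \<Longrightarrow> s \<le> 1 \<Longrightarrow> T \<le> x powr s / s"
    using Tl ln_powr_le xnn by fastforce
qed

lemma ind_sum: "(\<Sum>m<n. if m < M then c else 0) = real (min n M) * (c::real)"
  by (induction n) (auto simp: min_def algebra_simps)

theorem proposition3:
  fixes d :: real and lam :: "nat \<Rightarrow> complex"
  assumes "d > 1"
    and "\<And>n. n \<ge> 1 \<Longrightarrow> Re (lam n) \<le> 0"
    and "(\<lambda>n. lam n / complex_of_real (seq_a d n)) \<longlonglongrightarrow> 0"
  shows "(\<lambda>n. beta d lam n) \<longlonglongrightarrow> 0"
proof -
  define e where "e k = cmod (lam k) * real k powr d" for k
  have e_nn: "0 \<le> e k" for k by (simp add: e_def)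
  have elim: "e \<longlonglongrightarrow> 0"
  proof -
    have "(\<lambda>n. norm (lam n / complex_of_real (seq_a d n))) \<longlonglongrightarrow> 0"
      using tendsto_norm[OF assms(3)] by simp
    moreover have "\<forall>\<^sub>F n in sequentially. norm (lam n / complex_of_real (seq_a d n)) = e n"
      using eventually_ge_at_top[of "1::nat"]
    proof eventually_elim
      case (elim n)
      have np: "real n powr d > 0" using elim by simp
      have "lam n / complex_of_real (seq_a d n) = lam n * complex_of_real (real n powr d)"
        unfolding seq_a_def using np by (simp add: field_simps)
      then show ?case using np by (simp add: e_def norm_mult)
    qed
    ultimately show ?thesis by (rule Lim_transform_eventually)
  qed
  obtain C where Cp: "C > 0" and Cb: "\<And>k. e k \<le> C"
  proof -
    have "Bseq e" using elim convergent_imp_Bseq convergentI by blast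
    then obtain K where "K > 0" "\<And>k. norm (e k) \<le> K" by (auto elim: BseqE)
    hence "\<And>k. e k \<le> K" using e_nn by (simp add: abs_of_nonneg)
    thus ?thesis using that \<open>K > 0\<close> by blast
  qed
  define s where "s = 1 / (2*d)"
  have s0: "0 < s" and s1: "s \<le> 1" and ds: "d * s = 1/2" using assms(1) by (auto simp: s_def)
  show ?thesis
  proof (rule LIMSEQ_I)
    fix r :: real assume r: "0 < r"
    define \<delta> where "\<delta> = min (r*(d-1)/4) ((r*s/8) powr (1/s))"
    have \<delta>p: "\<delta> > 0" using r assms(1) s0 by (simp add: \<delta>_def)
    obtain M where M: "\<And>k. k \<ge> M \<Longrightarrow> e k \<le> \<delta>"
    proof -
      obtain no where "\<forall>n\<ge>no. norm (e n - 0) < \<delta>" using LIMSEQ_D[OF elim \<delta>p] by blast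
      hence "\<And>k. k \<ge> no \<Longrightarrow> e k \<le> \<delta>" using e_nn by (force simp: abs_of_nonneg)
      thus ?thesis using that by blast
    qed
    have es: "e k powr s \<le> r*s/8" if "k \<ge> M" for k
    proof -
      have "e k powr s \<le> ((r*s/8) powr (1/s)) powr s"
        using M[OF that] e_nn s0 by (intro powr_mono2) (auto simp: \<delta>_def)
      also have "\<dots> = r*s/8" using r s0 by (simp add: powr_powr)
      finally show ?thesis .
    qed
    define K where "K = 4 * real M * C powr s / (s * r)"
    have K0: "K \<ge> 0" using r s0 by (simp add: K_def)
    obtain N0 :: nat where N0: "real N0 > K^2" using reals_Archimedean2 by blast
    show "\<exists>no. \<forall>n\<ge>no. norm (beta d lam n - 0) < r"
    proof (intro exI allI impI)
      fix n assume "n \<ge> Suc (max M N0)"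
      hence n1: "n \<ge> 1" and nM: "n \<ge> M" and nN: "n \<ge> N0" by auto
      have sq: "sqrt (real n) > K" using nN N0 by (intro real_less_rsqrt) auto
      define f where "f m = ln (cmod (1 - lam (Suc m) / complex_of_real (seq_a d n)))" for m
      have fb: "0 \<le> f m" "f m \<le> e (Suc m) * real n powr d / real (Suc m) powr d"
        "f m \<le> (e (Suc m) * real n powr d / real (Suc m) powr d) powr s / s" for m
        using term_bounds[where d=d and lam=lam and n=n and k="Suc m", OF n1 _ assms(2)] s0 s1
        unfolding f_def e_def by auto
      have tl: "f (m+n) \<le> \<delta> * real n powr d * (1 / real (m+1+n) powr d)" for m
      proof -
        have "e (Suc (m+n)) \<le> \<delta>" using M nM by simp
        hence "e (Suc (m+n)) * real n powr d / real (Suc (m+n)) powr d \<le> \<delta> * real n powr d / real (Suc (m+n)) powr d"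
          by (intro divide_right_mono mult_right_mono) auto
        thus ?thesis using fb(2)[of "m+n"] by simp
      qed
      have ts: "summable (\<lambda>m. 1 / real (m+1+n) powr d)"
        and tb: "(\<Sum>m. 1 / real (m+1+n) powr d) \<le> real n powr (1-d) / (d-1)"
        using tail_sum[OF assms(1) n1] by auto
      have gs: "summable (\<lambda>m. \<delta> * real n powr d * (1 / real (m+1+n) powr d))"
        using summable_mult[OF ts] by blast
      have fs': "summable (\<lambda>m. f (m+n))"
        by (rule summable_comparison_test'[OF gs, of 0]) (use tl fb(1) in auto)
      hence fs: "summable f" by simp
      have split: "suminf f = (\<Sum>m. f (m+n)) + (\<Sum>m<n. f m)"
        by (rule suminf_split_initial_segment[OF fs])
      have tail: "(\<Sum>m. f (m+n)) \<le> r * real n / 4"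
      proof -
        have "(\<Sum>m. f (m+n)) \<le> (\<Sum>m. \<delta> * real n powr d * (1 / real (m+1+n) powr d))"
          by (rule suminf_le[OF tl fs' gs])
        also have "\<dots> = \<delta> * real n powr d * (\<Sum>m. 1 / real (m+1+n) powr d)"
          by (rule suminf_mult[OF ts])
        also have "\<dots> \<le> \<delta> * real n powr d * (real n powr (1-d) / (d-1))"
          using tb \<delta>p by (intro mult_left_mono) auto
        also have "\<dots> = \<delta> * real n / (d-1)"
        proof -
          have "real n powr d * real n powr (1-d) = real n powr (d + (1-d))" by (rule powr_add[symmetric])
          also have "\<dots> = real n" using n1 by simp
          finally have "real n powr d * real n powr (1-d) = real n" .
          thus ?thesis by (simp add: field_simps)
        qed
        also have "\<dots> \<le> (r*(d-1)/4) * real n / (d-1)"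
          using assms(1) by (intro divide_right_mono mult_right_mono) (auto simp: \<delta>_def)
        also have "\<dots> = r * real n / 4" using assms(1) by (simp add: field_simps)
        finally show ?thesis .
      qed
      have hb: "f m \<le> (r/8) * sqrt (real n) * (1 / sqrt (real (m+1)))
                   + (if m < M then C powr s / s * sqrt (real n) else 0)" for m
      proof -
        have pw: "(e (Suc m) * real n powr d / real (Suc m) powr d) powr s
              = e (Suc m) powr s * sqrt (real n) / sqrt (real (Suc m))"
          by (simp add: powr_mult powr_divide powr_powr ds powr_half_sqrt)
        have eb: "e (Suc m) powr s \<le> r*s/8 + (if m < M then C powr s else 0)"
        proof (cases "m < M")
          case True
          have "e (Suc m) powr s \<le> C powr s" using Cb e_nn s0 by (intro powr_mono2) auto
          moreover have "r*s/8 > 0" using r s0 by simp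
          ultimately show ?thesis using True by simp
        next
          case False then show ?thesis using es[of "Suc m"] by simp
        qed
        have sqm: "sqrt (real (Suc m)) \<ge> 1" by simp
        have "f m \<le> e (Suc m) powr s * sqrt (real n) / sqrt (real (Suc m)) / s"
          using fb(3)[of m] pw by simp
        also have "\<dots> \<le> (r*s/8 + (if m < M then C powr s else 0)) * sqrt (real n) / sqrt (real (Suc m)) / s"
          using eb s0 by (intro divide_right_mono mult_right_mono) auto
        also have "\<dots> = (r/8) * sqrt (real n) * (1 / sqrt (real (m+1)))
                   + (if m < M then C powr s / s * sqrt (real n) / sqrt (real (Suc m)) else 0)"
          using s0 by (simp add: field_simps)
        also have "\<dots> \<le> (r/8) * sqrt (real n) * (1 / sqrt (real (m+1)))
                   + (if m < M then C powr s / s * sqrt (real n) else 0)"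
        proof -
          define X where "X = C powr s / s * sqrt (real n)"
          have A: "0 \<le> X" using s0 by (simp add: X_def)
          have "X * 1 \<le> X * sqrt (real (Suc m))" using mult_left_mono[OF sqm A] .
          hence "X / sqrt (real (Suc m)) \<le> X" using sqm by (simp add: divide_le_eq)
          thus ?thesis unfolding X_def by simp
        qed
        finally show ?thesis .
      qed
      have head: "(\<Sum>m<n. f m) < r * real n / 4 + r * real n / 4"
      proof -
        have "(\<Sum>m<n. f m) \<le> (\<Sum>m<n. (r/8) * sqrt (real n) * (1 / sqrt (real (m+1)))
                   + (if m < M then C powr s / s * sqrt (real n) else 0))"
          by (rule sum_mono) (rule hb)
        also have "\<dots> = (r/8) * sqrt (real n) * (\<Sum>m<n. 1 / sqrt (real (m+1)))
                   + real (min n M) * (C powr s / s * sqrt (real n))"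
          by (simp add: sum.distrib sum_distrib_left ind_sum)
        also have "\<dots> \<le> (r/8) * sqrt (real n) * (2 * sqrt (real n))
                   + real M * (C powr s / s * sqrt (real n))"
          using r s0 sqrt_sum_le[of n] by (intro add_mono mult_left_mono mult_right_mono) auto
        also have "\<dots> = r * real n / 4 + (r/4) * K * sqrt (real n)"
          using r s0 by (simp add: K_def field_simps)
        also have "\<dots> < r * real n / 4 + (r/4) * sqrt (real n) * sqrt (real n)"
          using sq r n1 by (intro add_strict_left_mono mult_strict_right_mono mult_strict_left_mono) auto
        also have "\<dots> = r * real n / 4 + r * real n / 4" by simp
        finally show ?thesis .
      qed
      have rn: "r * real n > 0" using r n1 by simp
      have sum_lt: "suminf f < r * real n" using split tail head rn by linarith
      have sum_nn: "0 \<le> suminf f" using suminf_nonneg[OF fs] fb(1) by blast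
      have "beta d lam n = suminf f / real n" unfolding beta_def f_def by simp
      moreover have "suminf f / real n < r" using sum_lt n1 by (simp add: divide_less_eq)
      ultimately show "norm (beta d lam n - 0) < r" using sum_nn by simp
    qed
  qed
qed

end
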